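(* Let $n,m,n'$ be positive integers with $n\ge m$. Then $$\mu^*(n+n',m+1)\le \mu^*(n,m)+n'.$$
   Context: Let $\mathbb F_2=\{0,1\}$ be the field with two elements. For $u\in\mathbb F_2^n$, $|u|$ denotes the Hamming weight of $u$. A wiring on $n$ vertices is a matrix $W=(w_{i,j})\in M(n,n;\mathbb F_2)$ with $w_{i,i}=1$ for all $i$. The degree of vertex $j$ is the number of $1$s in the $j$th column of $W$. For $c\in\mathbb F_2^n$, $M(W,c)=\max\{|Wx+c| : x\in\mathbb F_2^n\}$. For $n\ge m\ge 1$, $A^*(n,m)$ is the set of wirings on $n$ vertices in which every vertex has degree exactly $m$, and $\mu^*(n,m)=\min\{M(W,0): W\in A^*(n,m)\}$. *)

theory Defs
  imports Main "HOL-Library.Z2"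
begin

text \<open>F_2 is the field \<open>bit\<close>. Vectors in F_2^n are functions nat => bit supported on {0..<n};
  n x n matrices are functions nat => nat => bit supported on {0..<n} x {0..<n}.\<close>

definition vecs :: "nat \<Rightarrow> (nat \<Rightarrow> bit) set" where
  "vecs n = {x. \<forall>j. n \<le> j \<longrightarrow> x j = 0}"

definition hweight :: "nat \<Rightarrow> (nat \<Rightarrow> bit) \<Rightarrow> nat" where
  "hweight n u = card {i. i < n \<and> u i \<noteq> 0}"

definition mat_vec :: "nat \<Rightarrow> (nat \<Rightarrow> nat \<Rightarrow> bit) \<Rightarrow> (nat \<Rightarrow> bit) \<Rightarrow> (nat \<Rightarrow> bit)" where
  "mat_vec n W x = (\<lambda>i. if i < n then (\<Sum>j<n. W i j * x j) else 0)"

definition is_matrix :: "nat \<Rightarrow> (nat \<Rightarrow> nat \<Rightarrow> bit) \<Rightarrow> bool" where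
  "is_matrix n W \<longleftrightarrow> (\<forall>i j. (n \<le> i \<or> n \<le> j) \<longrightarrow> W i j = 0)"

definition wiring :: "nat \<Rightarrow> (nat \<Rightarrow> nat \<Rightarrow> bit) \<Rightarrow> bool" where
  "wiring n W \<longleftrightarrow> is_matrix n W \<and> (\<forall>i<n. W i i = 1)"

definition degree :: "nat \<Rightarrow> (nat \<Rightarrow> nat \<Rightarrow> bit) \<Rightarrow> nat \<Rightarrow> nat" where
  "degree n W j = card {i. i < n \<and> W i j = 1}"

definition Mval :: "nat \<Rightarrow> (nat \<Rightarrow> nat \<Rightarrow> bit) \<Rightarrow> (nat \<Rightarrow> bit) \<Rightarrow> nat" where
  "Mval n W c = Max ((\<lambda>x. hweight n (\<lambda>i. mat_vec n W x i + c i)) ` vecs n)"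

definition Astar :: "nat \<Rightarrow> nat \<Rightarrow> (nat \<Rightarrow> nat \<Rightarrow> bit) set" where
  "Astar n m = {W. wiring n W \<and> (\<forall>j<n. degree n W j = m)}"

definition mu_star :: "nat \<Rightarrow> nat \<Rightarrow> nat" where
  "mu_star n m = Min ((\<lambda>W. Mval n W (\<lambda>_. 0)) ` Astar n m)"

end

theory Submission
  imports Defs
begin

lemma hw_bound: "hweight n u \<le> n"
proof -
  have "{i. i < n \<and> u i \<noteq> 0} \<subseteq> {..<n}" by auto
  then have "card {i. i < n \<and> u i \<noteq> 0} \<le> card {..<n}" by (intro card_mono) auto
  then show ?thesis by (simp add: hweight_def)
qed

lemma Mval_fin: "finite ((\<lambda>x. hweight n (\<lambda>i. mat_vec n W x i + c i)) ` vecs n)"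
  by (rule finite_subset[of _ "{..n}"]) (auto simp: hw_bound)

lemma Mval_ne: "(\<lambda>x. hweight n (\<lambda>i. mat_vec n W x i + c i)) ` vecs n \<noteq> {}"
proof -
  have "(\<lambda>_. 0) \<in> vecs n" by (simp add: vecs_def)
  then show ?thesis by blast
qed

lemma Mval_le:
  assumes "\<And>x. x \<in> vecs n \<Longrightarrow> hweight n (\<lambda>i. mat_vec n W x i + c i) \<le> B"
  shows "Mval n W c \<le> B"
  unfolding Mval_def using Mval_fin[of n W c] Mval_ne[of n W c] assms
  by (simp add: Max_le_iff)

lemma Mval_ge:
  assumes "x \<in> vecs n"
  shows "hweight n (\<lambda>i. mat_vec n W x i + c i) \<le> Mval n W c"
  unfolding Mval_def using Mval_fin[of n W c] assms
  by (intro Max_ge) auto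

lemma mu_fin: "finite ((\<lambda>W. Mval n W (\<lambda>_. 0)) ` Astar n m)"
  by (rule finite_subset[of _ "{..n}"]) (auto intro!: Mval_le simp: hw_bound)

lemma Astar_ne:
  assumes "1 \<le> m" "m \<le> n"
  shows "Astar n m \<noteq> {}"
proof -
  define W :: "nat \<Rightarrow> nat \<Rightarrow> bit" where
    "W = (\<lambda>i j. if i < n \<and> j < n \<and> ((j \<le> i \<and> i < j + m) \<or> i + n < j + m) then 1 else 0)"
  have "W \<in> Astar n m"
    unfolding Astar_def wiring_def is_matrix_def
  proof (intro CollectI conjI allI impI)
    fix i j assume "n \<le> i \<or> n \<le> j" then show "W i j = 0" by (auto simp: W_def)
  next
    fix i assume "i < n" then show "W i i = 1" using assms by (auto simp: W_def)
  next
    fix j assume j: "j < n"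
    have "{i. i < n \<and> W i j = 1} = {j..<min (j+m) n} \<union> {..<j+m-n}"
      using j assms by (auto simp: W_def)
    moreover have "{j..<min (j+m) n} \<inter> {..<j+m-n} = {}" using assms by auto
    ultimately have "card {i. i < n \<and> W i j = 1} = card {j..<min (j+m) n} + card {..<j+m-n}"
      by (simp add: card_Un_disjoint)
    also have "\<dots> = m" using j assms by auto
    finally show "degree n W j = m" by (simp add: degree_def)
  qed
  then show ?thesis by blast
qed

theorem lemma5p2:
  fixes n m n' :: nat
  assumes "1 \<le> m" and "m \<le> n" and "1 \<le> n'"
  shows "mu_star (n + n') (m + 1) \<le> mu_star n m + n'"
proof -
  define N where "N = n + n'"
  have ne: "(\<lambda>W. Mval n W (\<lambda>_. 0)) ` Astar n m \<noteq> {}" using Astar_ne[OF assms(1,2)] by blast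
  have "mu_star n m \<in> (\<lambda>W. Mval n W (\<lambda>_. 0)) ` Astar n m"
    unfolding mu_star_def using mu_fin ne by (rule Min_in)
  then obtain W where WA: "W \<in> Astar n m" and Wmu: "mu_star n m = Mval n W (\<lambda>_. 0)" by auto
  have n0: "0 < n" using assms by auto
  define W' :: "nat \<Rightarrow> nat \<Rightarrow> bit" where
    "W' = (\<lambda>i j. if i < n \<and> j < n then W i j
       else if i < n \<and> n \<le> j \<and> j < N then W i 0
       else if i = n \<and> j < n then 1
       else if n \<le> i \<and> i < N \<and> i = j then 1 else 0)"
  have Wm: "is_matrix n W" "\<And>i. i < n \<Longrightarrow> W i i = 1" "\<And>j. j < n \<Longrightarrow> degree n W j = m"
    using WA by (auto simp: Astar_def wiring_def)
  have W'A: "W' \<in> Astar N (m+1)"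
    unfolding Astar_def wiring_def
  proof (intro CollectI conjI allI impI)
    show "is_matrix N W'" using Wm(1) assms by (auto simp: is_matrix_def W'_def N_def)
  next
    fix i assume "i < N" then show "W' i i = 1" using Wm(2) by (auto simp: W'_def)
  next
    fix j assume j: "j < N"
    show "degree N W' j = m + 1"
    proof (cases "j < n")
      case True
      have "{i. i < N \<and> W' i j = 1} = insert n {i. i < n \<and> W i j = 1}"
        using True assms by (auto simp: W'_def N_def)
      then show ?thesis using Wm(3)[OF True] by (simp add: degree_def)
    next
      case False
      have "{i. i < N \<and> W' i j = 1} = insert j {i. i < n \<and> W i 0 = 1}"
        using False j assms by (auto simp: W'_def N_def)
      then show ?thesis using Wm(3)[OF n0] False by (simp add: degree_def)
    qed
  qed
  have "mu_star N (m+1) \<le> Mval N W' (\<lambda>_. 0)"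
    unfolding mu_star_def using mu_fin W'A by (intro Min_le) auto
  also have "Mval N W' (\<lambda>_. 0) \<le> Mval n W (\<lambda>_. 0) + n'"
  proof (rule Mval_le)
    fix x assume x: "x \<in> vecs N"
    define s where "s = (\<Sum>j\<in>{n..<N}. x j)"
    define z where "z = (\<lambda>j. if j < n then x j + (if j = 0 then s else 0) else 0)"
    have z: "z \<in> vecs n" by (auto simp: vecs_def z_def)
    have eq: "mat_vec N W' x i = mat_vec n W z i" if i: "i < n" for i
    proof -
      have sp: "{..<N} = {..<n} \<union> {n..<N}" by (auto simp: N_def)
      have "mat_vec N W' x i = (\<Sum>j<n. W' i j * x j) + (\<Sum>j\<in>{n..<N}. W' i j * x j)"
      proof -
        have "i < N" using i by (simp add: N_def)
        then show ?thesis unfolding mat_vec_def sp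
          by (simp only: if_True) (rule sum.union_disjoint, auto)
      qed
      also have "\<dots> = (\<Sum>j<n. W i j * x j) + (\<Sum>j\<in>{n..<N}. W i 0 * x j)"
        using i by (simp add: W'_def)
      also have "\<dots> = (\<Sum>j<n. W i j * x j) + W i 0 * s"
        by (simp only: s_def sum_distrib_left)
      also have "\<dots> = (\<Sum>j<n. W i j * x j) + (\<Sum>j<n. W i j * (if j = 0 then s else 0))"
      proof -
        have "(\<Sum>j<n. W i j * (if j = 0 then s else 0)) = (\<Sum>j<n. if j = 0 then W i j * s else 0)"
        proof (rule sum.cong)
          fix j show "W i j * (if j = 0 then s else 0) = (if j = 0 then W i j * s else 0)"
            by (cases "j = 0") (simp_all only: if_True if_False mult_zero_right simp_thms)
        qed simp
        also have "\<dots> = W i 0 * s" using n0 by (simp only: sum.delta finite_lessThan lessThan_iff if_True)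
        finally show ?thesis by (simp only:)
      qed
      also have "\<dots> = (\<Sum>j<n. W i j * z j)"
        unfolding sum.distrib[symmetric] distrib_left[symmetric]
        by (rule sum.cong) (simp_all only: z_def lessThan_iff if_True)
      finally show ?thesis using i by (simp add: mat_vec_def)
    qed
    have "{i. i < N \<and> mat_vec N W' x i + 0 \<noteq> 0}
          \<subseteq> {i. i < n \<and> mat_vec n W z i + 0 \<noteq> 0} \<union> {n..<N}"
      using eq by auto
    then have "hweight N (\<lambda>i. mat_vec N W' x i + 0)
          \<le> card ({i. i < n \<and> mat_vec n W z i + 0 \<noteq> 0} \<union> {n..<N})"
      unfolding hweight_def by (intro card_mono) auto
    also have "\<dots> \<le> hweight n (\<lambda>i. mat_vec n W z i + 0) + n'"
      unfolding hweight_def using card_Un_le[of "{i. i < n \<and> mat_vec n W z i + 0 \<noteq> 0}" "{n..<N}"]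
      by (simp add: N_def)
    also have "\<dots> \<le> Mval n W (\<lambda>_. 0) + n'"
      using Mval_ge[OF z, of W "\<lambda>_. 0"] by simp
    finally show "hweight N (\<lambda>i. mat_vec N W' x i + 0) \<le> Mval n W (\<lambda>_. 0) + n'" .
  qed
  finally show ?thesis using Wmu by (simp add: N_def)
qed

end
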